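(* Let $\mathbf{X}=(X_1,\ldots,X_d)$ be a random vector with values in $\mathcal{X}_1\times\cdots\times\mathcal{X}_d$ whose components $X_1,\ldots,X_d$ are mutually independent, let $\eta:\mathcal{X}_1\times\cdots\times\mathcal{X}_d\to\mathcal{Y}$ be a measurable function (the model, taken in the setting of the classical functional ANOVA decomposition), and let $Y=\eta(\mathbf{X})$. Let $k_{\mathcal{Y}}$ be a positive definite kernel on $\mathcal{Y}$ such that for every $A\subseteq\{1,\ldots,d\}$ and every $\mathbf{x}_A\in\mathcal{X}_A$, $\mathbb{E}_{\xi\sim \mathrm{P}_{Y\mid \mathbf{X}_A=\mathbf{x}_A}} k_{\mathcal{Y}}(\xi,\xi)<\infty$ (with the convention $\mathrm{P}_{Y\mid \mathbf{X}_\emptyset}=\mathrm{P}_Y$). Define $\mathrm{MMD}^2_{\mathrm{tot}}=\mathbb{E}\,k_{\mathcal{Y}}(Y,Y)-\mathbb{E}\,k_{\mathcal{Y}}(Y,Y')$, where $Y'$ is an independent copy of $Y$. Then $$\mathrm{MMD}^2_{\mathrm{tot}}=\sum_{A\subseteq\{1,\ldots,d\}}\mathrm{MMD}^2_A,\qquad \mathrm{MMD}^2_A=\sum_{B\subseteq A}(-1)^{|A|-|B|}\,\mathbb{E}_{\mathbf{X}_B}\Big(\mathrm{MMD}^2\big(\mathrm{P}_Y,\mathrm{P}_{Y\mid \mathbf{X}_B}\big)\Big).$$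
   Context: For $A=\{l_1,\ldots,l_{|A|}\}\subseteq\{1,\ldots,d\}$, $\mathbf{X}_A=(X_{l_1},\ldots,X_{l_{|A|}})\in\mathcal{X}_A=\mathcal{X}_{l_1}\times\cdots\times\mathcal{X}_{l_{|A|}}$ and $\mathrm{P}_{Y\mid\mathbf{X}_A}$ denotes the conditional distribution of $Y$ given $\mathbf{X}_A$. For probability measures $\mathrm{P},\mathrm{Q}$ on $\mathcal{Y}$, the squared maximum mean discrepancy is $\mathrm{MMD}^2(\mathrm{P},\mathrm{Q})=\mathbb{E}\,k_{\mathcal{Y}}(\xi,\xi')-2\,\mathbb{E}\,k_{\mathcal{Y}}(\xi,\zeta)+\mathbb{E}\,k_{\mathcal{Y}}(\zeta,\zeta')$ with $\xi,\xi'\sim\mathrm{P}$, $\zeta,\zeta'\sim\mathrm{Q}$ all independent; equivalently it is the squared RKHS distance between the kernel mean embeddings of $\mathrm{P}$ and $\mathrm{Q}$. $\mathbb{E}_{\mathbf{X}_B}(\mathrm{MMD}^2(\mathrm{P}_Y,\mathrm{P}_{Y\mid\mathbf{X}_B}))$ is the expectation over $\mathbf{X}_B$ of the MMD between $\mathrm{P}_Y$ and the conditional law of $Y$ given $\mathbf{X}_B$; for $B=\emptyset$ it equals $0$. The sum over $B\subseteq A$ includes $B=\emptyset$ and $B=A$. *)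

theory Defs
  imports "HOL-Probability.Probability"
begin

definition pd_kernel :: "('y \<Rightarrow> 'y \<Rightarrow> real) \<Rightarrow> 'y set \<Rightarrow> bool" where
  "pd_kernel k Y \<longleftrightarrow> (\<forall>x\<in>Y. \<forall>y\<in>Y. k x y = k y x) \<and>
     (\<forall>(n::nat) (c::nat \<Rightarrow> real) (x::nat \<Rightarrow> 'y). (\<forall>i<n. x i \<in> Y) \<longrightarrow>
        0 \<le> (\<Sum>i<n. \<Sum>j<n. c i * c j * k (x i) (x j)))"

definition mmd_sq :: "('y \<Rightarrow> 'y \<Rightarrow> real) \<Rightarrow> 'y measure \<Rightarrow> 'y measure \<Rightarrow> real" where
  "mmd_sq k P Q =
     (\<integral>z. k (fst z) (snd z) \<partial>(P \<Otimes>\<^sub>M P))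
     - 2 * (\<integral>z. k (fst z) (snd z) \<partial>(P \<Otimes>\<^sub>M Q))
     + (\<integral>z. k (fst z) (snd z) \<partial>(Q \<Otimes>\<^sub>M Q))"

text \<open>Conditional law of Y = eta(X) given X_B = xB, for independent inputs with
  marginal laws P i on the index set I: the law of eta(xB, X_{I-B}).
  For B = {} this is the law of eta under the product of the marginals, i.e. P_Y.\<close>
definition cond_law ::
  "'i set \<Rightarrow> ('i \<Rightarrow> 'x measure) \<Rightarrow> 'y measure \<Rightarrow> (('i \<Rightarrow> 'x) \<Rightarrow> 'y) \<Rightarrow> 'i set \<Rightarrow> ('i \<Rightarrow> 'x) \<Rightarrow> 'y measure" where
  "cond_law I P N \<eta> B xB = distr (\<Pi>\<^sub>M i\<in>I - B. P i) N (\<lambda>z. \<eta> (merge B (I - B) (xB, z)))"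

end

theory Submission
  imports Defs
begin
lemma mobius_aux:
  fixes f :: "'a set \<Rightarrow> real"
  assumes fA: "finite A" and xA: "x \<notin> A"
  shows "(\<Sum>B\<in>Pow (insert x A). (-1::real)^(card (insert x A) - card B) * f B) =
      - (\<Sum>B\<in>Pow A. (-1::real)^(card A - card B) * f B) + (\<Sum>B\<in>Pow A. (-1::real)^(card A - card B) * f (insert x B))"
proof -
  have inj: "inj_on (insert x) (Pow A)" using xA unfolding inj_on_def by (metis PowD insert_ident subsetD)
  have "(\<Sum>B\<in>Pow (insert x A). (-1::real)^(card (insert x A) - card B) * f B) =
     (\<Sum>B\<in>Pow A. (-1::real)^(card (insert x A) - card B) * f B) + (\<Sum>B\<in>insert x ` Pow A. (-1::real)^(card (insert x A) - card B) * f B)"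
    unfolding Pow_insert using fA xA by (intro sum.union_disjoint) auto
  also have "(\<Sum>B\<in>Pow A. (-1::real)^(card (insert x A) - card B) * f B) = - (\<Sum>B\<in>Pow A. (-1::real)^(card A - card B) * f B)"
  proof -
    have "(\<Sum>B\<in>Pow A. (-1::real)^(card (insert x A) - card B) * f B) = (\<Sum>B\<in>Pow A. - ((-1::real)^(card A - card B) * f B))"
    proof (rule sum.cong)
      fix B assume "B \<in> Pow A"
      then have "card B \<le> card A" using fA by (simp add: card_mono)
      then have "card (insert x A) - card B = Suc (card A - card B)" using fA xA by simp
      then show "(-1::real)^(card (insert x A) - card B) * f B = - ((-1::real)^(card A - card B) * f B)" by simp
    qed simp
    then show ?thesis by (simp add: sum_negf)
  qed
  also have "(\<Sum>B\<in>insert x ` Pow A. (-1::real)^(card (insert x A) - card B) * f B) = (\<Sum>B\<in>Pow A. (-1::real)^(card A - card B) * f (insert x B))"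
  proof -
    have "(\<Sum>B\<in>insert x ` Pow A. (-1::real)^(card (insert x A) - card B) * f B) = (\<Sum>B\<in>Pow A. (-1::real)^(card (insert x A) - card (insert x B)) * f (insert x B))"
      using inj by (simp add: sum.reindex)
    also have "\<dots> = (\<Sum>B\<in>Pow A. (-1::real)^(card A - card B) * f (insert x B))"
    proof (rule sum.cong)
      fix B assume "B \<in> Pow A"
      then have "finite B" "x \<notin> B" using fA xA finite_subset by auto
      then show "(-1::real)^(card (insert x A) - card (insert x B)) * f (insert x B) = (-1::real)^(card A - card B) * f (insert x B)"
        using fA xA by simp
    qed simp
    finally show ?thesis .
  qed
  finally show ?thesis .
qed

lemma mobius:
  fixes f :: "'a set \<Rightarrow> real"
  assumes "finite D"
  shows "(\<Sum>A\<in>Pow D. \<Sum>B\<in>Pow A. (-1::real)^(card A - card B) * f B) = f D"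
  using assms
proof (induction D arbitrary: f rule: finite_induct)
  case empty then show ?case by simp
next
  case (insert x F)
  have inj: "inj_on (insert x) (Pow F)" using insert(2) unfolding inj_on_def by (metis PowD insert_ident subsetD)
  have "(\<Sum>A\<in>Pow (insert x F). \<Sum>B\<in>Pow A. (-1::real)^(card A - card B) * f B) =
     (\<Sum>A\<in>Pow F. \<Sum>B\<in>Pow A. (-1::real)^(card A - card B) * f B) + (\<Sum>A\<in>insert x ` Pow F. \<Sum>B\<in>Pow A. (-1::real)^(card A - card B) * f B)"
    unfolding Pow_insert using insert(1,2) by (intro sum.union_disjoint) auto
  also have "(\<Sum>A\<in>insert x ` Pow F. \<Sum>B\<in>Pow A. (-1::real)^(card A - card B) * f B)
     = (\<Sum>A\<in>Pow F. \<Sum>B\<in>Pow (insert x A). (-1::real)^(card (insert x A) - card B) * f B)"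
    using inj by (simp add: sum.reindex)
  also have "\<dots> = (\<Sum>A\<in>Pow F. - (\<Sum>B\<in>Pow A. (-1::real)^(card A - card B) * f B) + (\<Sum>B\<in>Pow A. (-1::real)^(card A - card B) * f (insert x B)))"
  proof (rule sum.cong)
    fix A assume "A \<in> Pow F"
    then have "finite A" "x \<notin> A" using insert(1,2) finite_subset by auto
    then show "(\<Sum>B\<in>Pow (insert x A). (-1::real)^(card (insert x A) - card B) * f B) = - (\<Sum>B\<in>Pow A. (-1::real)^(card A - card B) * f B) + (\<Sum>B\<in>Pow A. (-1::real)^(card A - card B) * f (insert x B))"
      by (rule mobius_aux)
  qed simp
  also have "\<dots> = - (\<Sum>A\<in>Pow F. \<Sum>B\<in>Pow A. (-1::real)^(card A - card B) * f B) + (\<Sum>A\<in>Pow F. \<Sum>B\<in>Pow A. (-1::real)^(card A - card B) * (f \<circ> insert x) B)"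
    by (simp add: sum.distrib sum_negf sum_subtractf)
  also have "\<dots> = - f F + (f \<circ> insert x) F" using insert.IH by simp
  finally show ?case using insert.IH by simp
qed

lemma pd_kernel_diag: assumes "pd_kernel k Y" "a \<in> Y" shows "0 \<le> k a a"
proof -
  have H: "\<And>(n::nat) c x. (\<forall>i<n. x i \<in> Y) \<Longrightarrow> 0 \<le> (\<Sum>i<n. \<Sum>j<n. c i * c j * k (x i) (x j))"
    using assms(1) unfolding pd_kernel_def by blast
  have "0 \<le> (\<Sum>i<Suc 0. \<Sum>j<Suc 0. (\<lambda>_. 1::real) i * (\<lambda>_. 1::real) j * k ((\<lambda>_. a) i) ((\<lambda>_. a) j))"
    by (rule H) (use assms in auto)
  then show ?thesis by simp
qed

lemma pd_kernel_bound: assumes "pd_kernel k Y" "a \<in> Y" "b \<in> Y"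
  shows "\<bar>k a b\<bar> \<le> (k a a + k b b) / 2"
proof -
  have sym: "k b a = k a b" using assms unfolding pd_kernel_def by blast
  have gen: "0 \<le> k a a + 2 * s * k a b + s * s * k b b" for s :: real
  proof -
    let ?c = "\<lambda>i::nat. if i = 0 then 1 else s" and ?x = "\<lambda>i::nat. if i = 0 then a else b"
    have "\<forall>i<2. ?x i \<in> Y" using assms by auto
    have H: "\<And>(n::nat) c x. (\<forall>i<n. x i \<in> Y) \<Longrightarrow> 0 \<le> (\<Sum>i<n. \<Sum>j<n. c i * c j * k (x i) (x j))"
      using assms(1) unfolding pd_kernel_def by blast
    have "0 \<le> (\<Sum>i<2. \<Sum>j<2. ?c i * ?c j * k (?x i) (?x j))"
      by (rule H) (use assms in auto)
    also have "(\<Sum>i<2. \<Sum>j<2. ?c i * ?c j * k (?x i) (?x j)) = k a a + 2 * s * k a b + s * s * k b b"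
      by (simp add: numeral_2_eq_2 sym algebra_simps)
    finally show ?thesis .
  qed
  from gen[of 1] gen[of "-1"] show ?thesis by (simp add: abs_le_iff)
qed

lemma pair_return_distr:
  assumes "sigma_finite_measure M1" "y \<in> space M2"
  shows "M1 \<Otimes>\<^sub>M return M2 y = distr M1 (M1 \<Otimes>\<^sub>M M2) (\<lambda>x. (x, y))"
proof (rule pair_measure_eqI)
  show "sigma_finite_measure M1" by fact
  show "sigma_finite_measure (return M2 y)"
    using prob_space_return[OF assms(2)] by (simp add: prob_space_imp_sigma_finite)
  show "sets (M1 \<Otimes>\<^sub>M return M2 y) = sets (distr M1 (M1 \<Otimes>\<^sub>M M2) (\<lambda>x. (x, y)))"
    by (simp cong: sets_pair_measure_cong)
  fix A B assume A: "A \<in> sets M1" and B: "B \<in> sets (return M2 y)"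
  then have B': "B \<in> sets M2" by simp
  have "emeasure (distr M1 (M1 \<Otimes>\<^sub>M M2) (\<lambda>x. (x, y))) (A \<times> B) = emeasure M1 ((\<lambda>x. (x, y)) -` (A \<times> B) \<inter> space M1)"
    using A B' assms(2) by (intro emeasure_distr) auto
  also have "(\<lambda>x. (x, y)) -` (A \<times> B) \<inter> space M1 = (if y \<in> B then A else {})"
    using sets.sets_into_space[OF A] by auto
  finally show "emeasure M1 A * emeasure (return M2 y) B = emeasure (distr M1 (M1 \<Otimes>\<^sub>M M2) (\<lambda>x. (x, y))) (A \<times> B)"
    using B' by (simp add: indicator_def)
qed

lemma integral_pair_return:
  fixes f :: "_ \<Rightarrow> real"
  assumes "sigma_finite_measure M1" "y \<in> space M2" "sets M1 = sets N1"
    and f: "f \<in> borel_measurable (N1 \<Otimes>\<^sub>M M2)"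
  shows "(\<integral>z. f z \<partial>(M1 \<Otimes>\<^sub>M return M2 y)) = (\<integral>x. f (x, y) \<partial>M1)"
proof -
  have f': "f \<in> borel_measurable (M1 \<Otimes>\<^sub>M M2)"
    using f by (subst measurable_cong_sets[OF sets_pair_measure_cong[OF assms(3) refl] refl]) 
  have m: "(\<lambda>x. (x, y)) \<in> measurable M1 (M1 \<Otimes>\<^sub>M M2)" using assms(2) by simp
  show ?thesis
    unfolding pair_return_distr[OF assms(1,2)] by (rule integral_distr[OF m f'])
qed

theorem mainTheorem1:
  fixes M :: "'a measure" and S :: "nat \<Rightarrow> 'x measure" and X :: "nat \<Rightarrow> 'a \<Rightarrow> 'x"
    and N :: "'y measure" and \<eta> :: "(nat \<Rightarrow> 'x) \<Rightarrow> 'y"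
    and k :: "'y \<Rightarrow> 'y \<Rightarrow> real" and d :: nat
  defines "P \<equiv> (\<lambda>i. distr M (S i) (X i))"
  defines "Y \<equiv> (\<lambda>\<omega>. \<eta> (\<lambda>i\<in>{1..d}. X i \<omega>))"
  defines "PY \<equiv> distr M N Y"
  assumes "prob_space M"
    and "\<And>i. i \<in> {1..d} \<Longrightarrow> X i \<in> measurable M (S i)"
    and "prob_space.indep_vars M S X {1..d}"
    and "\<eta> \<in> measurable (\<Pi>\<^sub>M i\<in>{1..d}. S i) N"
    and "pd_kernel k (space N)"
    and "case_prod k \<in> borel_measurable (N \<Otimes>\<^sub>M N)"
    and "\<And>A xA. A \<subseteq> {1..d} \<Longrightarrow> xA \<in> space (\<Pi>\<^sub>M i\<in>A. S i) \<Longrightarrow>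
           (\<integral>\<^sup>+ y. ennreal (k y y) \<partial>(cond_law {1..d} P N \<eta> A xA)) < \<infinity>"
  shows "(\<integral>\<omega>. k (Y \<omega>) (Y \<omega>) \<partial>M) - (\<integral>z. k (fst z) (snd z) \<partial>(PY \<Otimes>\<^sub>M PY))
       = (\<Sum>A\<in>Pow {1..d}. \<Sum>B\<in>Pow A. (-1::real) ^ (card A - card B) *
            (\<integral>xB. mmd_sq k PY (cond_law {1..d} P N \<eta> B xB)
               \<partial>(distr M (\<Pi>\<^sub>M i\<in>B. S i) (\<lambda>\<omega>. \<lambda>i\<in>B. X i \<omega>))))"
proof -
  note M = assms(4) and Xm = assms(5) and ind = assms(6) and etam = assms(7)
    and pd = assms(8) and km0 = assms(9) and fin = assms(10)
  interpret prob_space M by (rule M)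
  define D where "D = {1..d}"
  define XD where "XD = (\<lambda>\<omega>. \<lambda>i\<in>D. X i \<omega>)"
  define muD where "muD = distr M (\<Pi>\<^sub>M i\<in>D. S i) XD"
  define u :: "nat \<Rightarrow> 'x" where "u = (\<lambda>_. undefined)"
  have XDm: "XD \<in> measurable M (\<Pi>\<^sub>M i\<in>D. S i)"
    unfolding XD_def D_def by (rule measurable_restrict) (rule Xm)
  have etam': "\<eta> \<in> measurable (\<Pi>\<^sub>M i\<in>D. S i) N" using etam by (simp add: D_def)
  have Ym: "Y \<in> measurable M N"
  proof -
    have "Y = \<eta> \<circ> XD" by (simp add: Y_def XD_def D_def fun_eq_iff)
    then show ?thesis using measurable_comp[OF XDm etam'] by simp
  qed
  have PY_muD: "PY = distr muD N \<eta>"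
    unfolding PY_def muD_def using XDm etam'
    by (subst distr_distr) (auto simp: Y_def XD_def D_def comp_def)
  interpret PY: prob_space PY unfolding PY_def by (rule prob_space_distr[OF Ym])
  interpret PP: pair_prob_space PY PY ..
  have sPY: "sets PY = sets N" "space PY = space N" by (simp_all add: PY_def)
  have km: "(\<lambda>z. k (fst z) (snd z)) \<in> borel_measurable (N \<Otimes>\<^sub>M N)"
    using km0 by (simp add: case_prod_beta')
  have kmPY: "(\<lambda>z. k (fst z) (snd z)) \<in> borel_measurable (PY \<Otimes>\<^sub>M PY)"
    using km by (subst measurable_cong_sets[OF sets_pair_measure_cong[OF sPY(1) sPY(1)] refl])
  have kdm: "(\<lambda>y. k y y) \<in> borel_measurable N"
  proof -
    have "(\<lambda>y. (y, y)) \<in> measurable N (N \<Otimes>\<^sub>M N)" by simp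
    from measurable_comp[OF this km] show ?thesis by (simp add: comp_def)
  qed
  have kdmPY: "(\<lambda>y. k y y) \<in> borel_measurable PY" using kdm by (simp add: PY_def)
  have knn: "\<And>y. y \<in> space N \<Longrightarrow> 0 \<le> k y y" using pd_kernel_diag[OF pd] by blast
  have muD_Pi: "muD = (\<Pi>\<^sub>M i\<in>D. P i)"
  proof (cases "D = {}")
    case True
    show ?thesis
    proof (rule measure_eqI_finite[where A="{u}"])
      show "sets muD = Pow {u}" "sets (\<Pi>\<^sub>M i\<in>D. P i) = Pow {u}"
        by (simp_all add: muD_def True PiM_empty u_def)
      fix a assume "a \<in> {u}"
      then have a: "a = u" by simp
      have "emeasure muD {u} = emeasure M (XD -` {u} \<inter> space M)"
        unfolding muD_def using XDm by (subst emeasure_distr) (auto simp: True PiM_empty u_def)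
      also have "XD -` {u} \<inter> space M = space M" by (auto simp: XD_def True u_def)
      finally show "emeasure muD {a} = emeasure (\<Pi>\<^sub>M i\<in>D. P i) {a}"
        using a by (simp add: True PiM_empty u_def emeasure_space_1)
    qed simp
  next
    case False
    have "indep_vars S X D" using ind by (simp add: D_def)
    then show ?thesis
      unfolding muD_def XD_def P_def
      by (subst (asm) indep_vars_iff_distr_eq_PiM'[OF False]) (auto simp: D_def intro: Xm)
  qed
  have cl0: "cond_law D P N \<eta> {} u = PY"
  proof -
    have "cond_law D P N \<eta> {} u = distr muD N (\<lambda>z. \<eta> (merge {} D (u, z)))"
      unfolding cond_law_def muD_Pi by simp
    also have "\<dots> = distr muD N \<eta>"
    proof (rule distr_cong)
      fix z assume "z \<in> space muD"
      then have "z \<in> extensional D" by (simp add: muD_def space_PiM PiE_def)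
      then have "merge {} D (u, z) = z" by (auto simp: merge_def extensional_def fun_eq_iff)
      then show "\<eta> (merge {} D (u, z)) = \<eta> z" by simp
    qed simp_all
    finally show ?thesis using PY_muD by simp
  qed
  have kd_int: "integrable PY (\<lambda>y. k y y)"
  proof (subst integrable_iff_bounded, intro conjI)
    show "(\<lambda>y. k y y) \<in> borel_measurable PY" using kdm by (simp add: PY_def)
    have "u \<in> space (\<Pi>\<^sub>M i\<in>{}. S i)" by (simp add: PiM_empty u_def)
    from fin[OF _ this] have "(\<integral>\<^sup>+ y. ennreal (k y y) \<partial>PY) < \<infinity>"
      using cl0 by (simp add: D_def)
    moreover have "(\<integral>\<^sup>+ y. ennreal (norm (k y y)) \<partial>PY) = (\<integral>\<^sup>+ y. ennreal (k y y) \<partial>PY)"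
      by (rule nn_integral_cong) (simp add: sPY knn)
    ultimately show "(\<integral>\<^sup>+ y. ennreal (norm (k y y)) \<partial>PY) < \<infinity>" by simp
  qed
  have k_int: "integrable (PY \<Otimes>\<^sub>M PY) (\<lambda>z. k (fst z) (snd z))"
  proof (rule Bochner_Integration.integrable_bound)
    have i1: "integrable (PY \<Otimes>\<^sub>M PY) (\<lambda>z. k (fst z) (fst z))"
    proof -
      have "integrable (distr (PY \<Otimes>\<^sub>M PY) PY fst) (\<lambda>y. k y y)"
        using PY.distr_pair_fst[of PY] kd_int by simp
      then show ?thesis
        by (subst (asm) integrable_distr_eq) (auto simp: sPY kdmPY)
    qed
    have i2: "integrable (PY \<Otimes>\<^sub>M PY) (\<lambda>z. k (snd z) (snd z))"
    proof -
      have "integrable (PY \<Otimes>\<^sub>M PY) (\<lambda>(x,y). (\<lambda>z. k (snd z) (snd z)) (y,x))"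
        using i1 by (simp add: case_prod_beta')
      then show ?thesis by (rule PP.integrable_product_swap_iff[THEN iffD1])
    qed
    show "integrable (PY \<Otimes>\<^sub>M PY) (\<lambda>z. (k (fst z) (fst z) + k (snd z) (snd z)) / 2)"
      using i1 i2 by simp
    show "(\<lambda>z. k (fst z) (snd z)) \<in> borel_measurable (PY \<Otimes>\<^sub>M PY)" by (rule kmPY)
    show "AE z in PY \<Otimes>\<^sub>M PY. norm (k (fst z) (snd z)) \<le> norm ((k (fst z) (fst z) + k (snd z) (snd z)) / 2)"
    proof (rule AE_I2)
      fix z assume "z \<in> space (PY \<Otimes>\<^sub>M PY)"
      then have z: "fst z \<in> space N" "snd z \<in> space N" by (auto simp: space_pair_measure sPY)
      show "norm (k (fst z) (snd z)) \<le> norm ((k (fst z) (fst z) + k (snd z) (snd z)) / 2)"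
        using pd_kernel_bound[OF pd z] knn[OF z(1)] knn[OF z(2)] by simp
    qed
  qed
  have k_int': "integrable (PY \<Otimes>\<^sub>M PY) (case_prod k)"
    using k_int by (simp add: case_prod_beta')
  define C where "C = (\<integral>z. k (fst z) (snd z) \<partial>(PY \<Otimes>\<^sub>M PY))"
  define g where "g = (\<lambda>y. \<integral>x. k x y \<partial>PY)"
  have g_int: "integrable PY g" unfolding g_def by (rule PP.integrable_snd[OF k_int'])
  have g_C: "(\<integral>y. g y \<partial>PY) = C"
    unfolding g_def C_def using PP.integral_snd[OF k_int'] by (simp add: case_prod_beta')
  have gm: "g \<in> borel_measurable N"
    using borel_measurable_integrable[OF g_int] by (simp add: PY_def)
  have mmd_ret: "mmd_sq k PY (return N y) = C - 2 * g y + k y y" if y: "y \<in> space N" for y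
  proof -
    have sfPY: "sigma_finite_measure PY" by (rule PY.sigma_finite_measure_axioms)
    have sfR: "sigma_finite_measure (return N y)"
      using prob_space_return[OF y] by (simp add: prob_space_imp_sigma_finite)
    have e1: "(\<integral>z. k (fst z) (snd z) \<partial>(PY \<Otimes>\<^sub>M return N y)) = g y"
      unfolding g_def by (subst integral_pair_return[OF sfPY y sPY(1) km]) simp
    have e2: "(\<integral>z. k (fst z) (snd z) \<partial>(return N y \<Otimes>\<^sub>M return N y)) = k y y"
    proof -
      have "(\<integral>z. k (fst z) (snd z) \<partial>(return N y \<Otimes>\<^sub>M return N y)) = (\<integral>x. k x y \<partial>return N y)"
        by (subst integral_pair_return[OF sfR y _ km]) simp_all
      also have "\<dots> = k y y"
      proof (rule integral_return[OF y])
        have "(\<lambda>x. (x, y)) \<in> measurable N (N \<Otimes>\<^sub>M N)" using y by simp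
        from measurable_comp[OF this km] show "(\<lambda>x. k x y) \<in> borel_measurable N" by (simp add: comp_def)
      qed
      finally show ?thesis .
    qed
    show ?thesis unfolding mmd_sq_def C_def[symmetric] e1 e2 by simp
  qed
  have cnt: "count_space {u} = return (count_space {u}) u"
    by (rule measure_eqI) (auto simp: indicator_def subset_singleton_iff)
  have clD: "cond_law D P N \<eta> D xB = return N (\<eta> xB)" if xB: "xB \<in> space (\<Pi>\<^sub>M i\<in>D. S i)" for xB
  proof -
    have ext: "xB \<in> extensional D" using xB by (simp add: space_PiM PiE_def)
    then have mg: "merge D {} (xB, u) = xB" by (auto simp: merge_def extensional_def fun_eq_iff)
    have ex: "\<eta> xB \<in> space N" using measurable_space[OF etam' xB] .
    have "cond_law D P N \<eta> D xB = distr (return (count_space {u}) u) N (\<lambda>z. \<eta> (merge D {} (xB, z)))"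
      unfolding cond_law_def by (simp add: PiM_empty u_def[symmetric] cnt[symmetric])
    also have "\<dots> = return N (\<eta> (merge D {} (xB, u)))"
      by (rule distr_return) (simp_all add: mg ex)
    finally show ?thesis by (simp add: mg)
  qed
  have Fm: "(\<lambda>y. C - 2 * g y + k y y) \<in> borel_measurable N" using gm kdm by measurable
  have "(\<Sum>A\<in>Pow {1..d}. \<Sum>B\<in>Pow A. (-1::real) ^ (card A - card B) *
            (\<integral>xB. mmd_sq k PY (cond_law {1..d} P N \<eta> B xB)
               \<partial>(distr M (\<Pi>\<^sub>M i\<in>B. S i) (\<lambda>\<omega>. \<lambda>i\<in>B. X i \<omega>))))
      = (\<integral>xB. mmd_sq k PY (cond_law D P N \<eta> D xB) \<partial>muD)"
    using mobius[where D=D and f="\<lambda>B. (\<integral>xB. mmd_sq k PY (cond_law {1..d} P N \<eta> B xB)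
               \<partial>(distr M (\<Pi>\<^sub>M i\<in>B. S i) (\<lambda>\<omega>. \<lambda>i\<in>B. X i \<omega>)))"]
    by (simp add: D_def muD_def XD_def)
  also have "\<dots> = (\<integral>xB. (\<lambda>y. C - 2 * g y + k y y) (\<eta> xB) \<partial>muD)"
  proof (rule Bochner_Integration.integral_cong[OF refl])
    fix xB assume "xB \<in> space muD"
    then have xB: "xB \<in> space (\<Pi>\<^sub>M i\<in>D. S i)" by (simp add: muD_def)
    show "mmd_sq k PY (cond_law D P N \<eta> D xB) = C - 2 * g (\<eta> xB) + k (\<eta> xB) (\<eta> xB)"
      using clD[OF xB] mmd_ret[OF measurable_space[OF etam' xB]] by simp
  qed
  also have "\<dots> = (\<integral>y. C - 2 * g y + k y y \<partial>PY)"
    unfolding PY_muD by (rule integral_distr[symmetric]) (simp_all add: muD_def etam' Fm)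
  also have "\<dots> = C - 2 * C + (\<integral>y. k y y \<partial>PY)"
    using g_int kd_int g_C by (simp add: Bochner_Integration.integral_add Bochner_Integration.integral_diff PY.prob_space)
  also have "(\<integral>y. k y y \<partial>PY) = (\<integral>\<omega>. k (Y \<omega>) (Y \<omega>) \<partial>M)"
    unfolding PY_def by (rule integral_distr[OF Ym kdm])
  finally have "(\<Sum>A\<in>Pow {1..d}. \<Sum>B\<in>Pow A. (-1::real) ^ (card A - card B) *
            (\<integral>xB. mmd_sq k PY (cond_law {1..d} P N \<eta> B xB)
               \<partial>(distr M (\<Pi>\<^sub>M i\<in>B. S i) (\<lambda>\<omega>. \<lambda>i\<in>B. X i \<omega>)))) = C - 2 * C + (\<integral>\<omega>. k (Y \<omega>) (Y \<omega>) \<partial>M)" .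
  then show ?thesis unfolding C_def by linarith
qed
end
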